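(* Up to isomorphism, the specific sets of $S$-probabilities (for arbitrary sets $S$) are exactly the bounded posets with an antitone involution that have a full and uniform set of specific states. That is: every specific set of $S$-probabilities, with the pointwise order, $p\mapsto 1-p$, $0$ and $1$, is a bounded poset with an antitone involution having a full and uniform set of specific states; and conversely every bounded poset with an antitone involution having a full and uniform set of specific states is isomorphic to a specific set of $S$-probabilities for some set $S$.
   Context: An $S$-probability is a function $p\colon S\to[0,1]$; sets $P$ of them are ordered pointwise, $0,1$ are constant functions, sums are pointwise. In a bounded poset $\mathbf P=(P,\le,{}',0,1)$ with an antitone involution $'$ (i.e. $p\le q\Rightarrow q'\le p'$ and $p''=p$), $p\wedge q=0$ means the only lower bound of $p,q$ in $P$ is $0$. A set $P$ of $S$-probabilities is specific if (1) $0,1\in P$; (2) $p\in P\Rightarrow 1-p\in P$; (3) $p,q\in P$, $p\wedge q=0\Rightarrow p+q\in P$. A specific state on $\mathbf P$ is a map $s\colon P\to[0,1]$ with (S1) $s(0)=0$, $s(1)=1$; (S2) $s(p')=1-s(p)$; (S3) $p\le q\Rightarrow s(p)\le s(q)$; (S4) if $p\wedge q=0$ then there is $r\in P$ with $r\ge p$, $r\ge q$ and $s(r)=s(p)+s(q)$. A set $T$ of specific states is full if $s(p)\le s(q)$ for all $s\in T$ implies $p\le q$, and uniform if for every disjoint pair $p,q$ a single $r$ witnesses (S4) simultaneously for all $s\in T$. Isomorphism means an order isomorphism preserving $'$, $0$ and $1$. *)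

theory Defs
  imports Complex_Main "HOL-Library.FuncSet"
begin

definition bpai :: "'a set \<Rightarrow> ('a \<Rightarrow> 'a \<Rightarrow> bool) \<Rightarrow> ('a \<Rightarrow> 'a) \<Rightarrow> 'a \<Rightarrow> 'a \<Rightarrow> bool" where
  "bpai P le c z u \<longleftrightarrow>
     (\<forall>p\<in>P. le p p) \<and>
     (\<forall>p\<in>P. \<forall>q\<in>P. le p q \<and> le q p \<longrightarrow> p = q) \<and>
     (\<forall>p\<in>P. \<forall>q\<in>P. \<forall>r\<in>P. le p q \<and> le q r \<longrightarrow> le p r) \<and>
     z \<in> P \<and> u \<in> P \<and> (\<forall>p\<in>P. le z p \<and> le p u) \<and>
     (\<forall>p\<in>P. c p \<in> P) \<and>
     (\<forall>p\<in>P. \<forall>q\<in>P. le p q \<longrightarrow> le (c q) (c p)) \<and>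
     (\<forall>p\<in>P. c (c p) = p)"

text \<open>p \<and> q = 0: the only lower bound of p, q in P is 0.\<close>
definition disj :: "'a set \<Rightarrow> ('a \<Rightarrow> 'a \<Rightarrow> bool) \<Rightarrow> 'a \<Rightarrow> 'a \<Rightarrow> 'a \<Rightarrow> bool" where
  "disj P le z p q \<longleftrightarrow> (\<forall>r\<in>P. le r p \<and> le r q \<longrightarrow> r = z)"

definition specific_state ::
  "'a set \<Rightarrow> ('a \<Rightarrow> 'a \<Rightarrow> bool) \<Rightarrow> ('a \<Rightarrow> 'a) \<Rightarrow> 'a \<Rightarrow> 'a \<Rightarrow> ('a \<Rightarrow> real) \<Rightarrow> bool" where
  "specific_state P le c z u s \<longleftrightarrow>
     (\<forall>p\<in>P. 0 \<le> s p \<and> s p \<le> 1) \<and>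
     s z = 0 \<and> s u = 1 \<and>
     (\<forall>p\<in>P. s (c p) = 1 - s p) \<and>
     (\<forall>p\<in>P. \<forall>q\<in>P. le p q \<longrightarrow> s p \<le> s q) \<and>
     (\<forall>p\<in>P. \<forall>q\<in>P. disj P le z p q \<longrightarrow>
        (\<exists>r\<in>P. le p r \<and> le q r \<and> s r = s p + s q))"

definition full_states :: "'a set \<Rightarrow> ('a \<Rightarrow> 'a \<Rightarrow> bool) \<Rightarrow> ('a \<Rightarrow> real) set \<Rightarrow> bool" where
  "full_states P le T \<longleftrightarrow>
     (\<forall>p\<in>P. \<forall>q\<in>P. (\<forall>s\<in>T. s p \<le> s q) \<longrightarrow> le p q)"

definition uniform_states :: "'a set \<Rightarrow> ('a \<Rightarrow> 'a \<Rightarrow> bool) \<Rightarrow> 'a \<Rightarrow> ('a \<Rightarrow> real) set \<Rightarrow> bool" where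
  "uniform_states P le z T \<longleftrightarrow>
     (\<forall>p\<in>P. \<forall>q\<in>P. disj P le z p q \<longrightarrow>
        (\<exists>r\<in>P. le p r \<and> le q r \<and> (\<forall>s\<in>T. s r = s p + s q)))"

definition has_full_uniform_states ::
  "'a set \<Rightarrow> ('a \<Rightarrow> 'a \<Rightarrow> bool) \<Rightarrow> ('a \<Rightarrow> 'a) \<Rightarrow> 'a \<Rightarrow> 'a \<Rightarrow> bool" where
  "has_full_uniform_states P le c z u \<longleftrightarrow>
     (\<exists>T. (\<forall>s\<in>T. specific_state P le c z u s) \<and> full_states P le T \<and> uniform_states P le z T)"

definition poset_iso ::
  "'a set \<Rightarrow> ('a \<Rightarrow> 'a \<Rightarrow> bool) \<Rightarrow> ('a \<Rightarrow> 'a) \<Rightarrow> 'a \<Rightarrow> 'a \<Rightarrow>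
   'b set \<Rightarrow> ('b \<Rightarrow> 'b \<Rightarrow> bool) \<Rightarrow> ('b \<Rightarrow> 'b) \<Rightarrow> 'b \<Rightarrow> 'b \<Rightarrow> ('a \<Rightarrow> 'b) \<Rightarrow> bool" where
  "poset_iso P le c z u Q le' c' z' u' f \<longleftrightarrow>
     bij_betw f P Q \<and>
     (\<forall>p\<in>P. \<forall>q\<in>P. le p q \<longleftrightarrow> le' (f p) (f q)) \<and>
     (\<forall>p\<in>P. f (c p) = c' (f p)) \<and> f z = z' \<and> f u = u'"

text \<open>An S-probability is represented as an extensional function S \<rightarrow> [0,1]
  (value undefined outside S, as in FuncSet).\<close>

definition prob_le :: "'s set \<Rightarrow> ('s \<Rightarrow> real) \<Rightarrow> ('s \<Rightarrow> real) \<Rightarrow> bool" where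
  "prob_le S p q \<longleftrightarrow> (\<forall>x\<in>S. p x \<le> q x)"

definition prob_compl :: "'s set \<Rightarrow> ('s \<Rightarrow> real) \<Rightarrow> ('s \<Rightarrow> real)" where
  "prob_compl S p = (\<lambda>x\<in>S. 1 - p x)"

definition prob_zero :: "'s set \<Rightarrow> ('s \<Rightarrow> real)" where
  "prob_zero S = (\<lambda>x\<in>S. 0)"

definition prob_one :: "'s set \<Rightarrow> ('s \<Rightarrow> real)" where
  "prob_one S = (\<lambda>x\<in>S. 1)"

definition prob_plus :: "'s set \<Rightarrow> ('s \<Rightarrow> real) \<Rightarrow> ('s \<Rightarrow> real) \<Rightarrow> ('s \<Rightarrow> real)" where
  "prob_plus S p q = (\<lambda>x\<in>S. p x + q x)"

definition specific_set :: "'s set \<Rightarrow> ('s \<Rightarrow> real) set \<Rightarrow> bool" where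
  "specific_set S P \<longleftrightarrow>
     P \<subseteq> (S \<rightarrow>\<^sub>E {0..1}) \<and>
     prob_zero S \<in> P \<and> prob_one S \<in> P \<and>
     (\<forall>p\<in>P. prob_compl S p \<in> P) \<and>
     (\<forall>p\<in>P. \<forall>q\<in>P. disj P (prob_le S) (prob_zero S) p q \<longrightarrow> prob_plus S p q \<in> P)"

end

theory Submission
  imports Defs
begin

lemma part1:
  assumes sp: "specific_set S P"
  shows "bpai P (prob_le S) (prob_compl S) (prob_zero S) (prob_one S) \<and>
         has_full_uniform_states P (prob_le S) (prob_compl S) (prob_zero S) (prob_one S)"
proof -
  have sub: "P \<subseteq> (S \<rightarrow>\<^sub>E {0..1})" and z: "prob_zero S \<in> P" and o: "prob_one S \<in> P"
    and cc: "\<forall>p\<in>P. prob_compl S p \<in> P"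
    and pl: "\<forall>p\<in>P. \<forall>q\<in>P. disj P (prob_le S) (prob_zero S) p q \<longrightarrow> prob_plus S p q \<in> P"
    using sp unfolding specific_set_def by auto
  have ext: "\<And>p x. p \<in> P \<Longrightarrow> x \<notin> S \<Longrightarrow> p x = undefined" using sub by (auto simp: PiE_def extensional_def)
  have rng: "\<And>p x. p \<in> P \<Longrightarrow> x \<in> S \<Longrightarrow> 0 \<le> p x \<and> p x \<le> 1" using sub by (force simp: PiE_def Pi_def)
  have antis: "\<forall>p\<in>P. \<forall>q\<in>P. prob_le S p q \<and> prob_le S q p \<longrightarrow> p = q"
  proof (intro ballI impI)
    fix p q assume "p \<in> P" "q \<in> P" "prob_le S p q \<and> prob_le S q p"
    then show "p = q" using ext[of p] ext[of q] \<open>p \<in> P\<close> \<open>q \<in> P\<close> unfolding prob_le_def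
      by (metis order_antisym HOL.ext)
  qed
  have bp: "bpai P (prob_le S) (prob_compl S) (prob_zero S) (prob_one S)"
    unfolding bpai_def
  proof (intro conjI)
    show "\<forall>p\<in>P. prob_le S p p" by (simp add: prob_le_def)
    show "\<forall>p\<in>P. \<forall>q\<in>P. \<forall>r\<in>P. prob_le S p q \<and> prob_le S q r \<longrightarrow> prob_le S p r"
      unfolding prob_le_def by (meson order_trans)
    show "\<forall>p\<in>P. prob_le S (prob_zero S) p \<and> prob_le S p (prob_one S)"
      using rng by (simp add: prob_le_def prob_zero_def prob_one_def)
    show "\<forall>p\<in>P. \<forall>q\<in>P. prob_le S p q \<longrightarrow> prob_le S (prob_compl S q) (prob_compl S p)"
      by (simp add: prob_le_def prob_compl_def)
    show "\<forall>p\<in>P. prob_compl S (prob_compl S p) = p"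
    proof
      fix p assume pP: "p \<in> P"
      show "prob_compl S (prob_compl S p) = p"
      proof
        fix x show "prob_compl S (prob_compl S p) x = p x"
          using ext[OF pP, of x] by (cases "x \<in> S") (simp_all add: prob_compl_def)
      qed
    qed
  qed (use antis z o cc in auto)
  define T where "T = (\<lambda>x. \<lambda>p::(_ \<Rightarrow> real). p x) ` S"
  have st: "\<forall>s\<in>T. specific_state P (prob_le S) (prob_compl S) (prob_zero S) (prob_one S) s"
  proof
    fix s assume "s \<in> T"
    then obtain x where x: "x \<in> S" "s = (\<lambda>p. p x)" unfolding T_def by auto
    show "specific_state P (prob_le S) (prob_compl S) (prob_zero S) (prob_one S) s"
      unfolding specific_state_def
    proof (intro conjI ballI impI)
      fix p q assume "p \<in> P" "q \<in> P" "disj P (prob_le S) (prob_zero S) p q"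
      then show "\<exists>r\<in>P. prob_le S p r \<and> prob_le S q r \<and> s r = s p + s q"
        using pl x rng by (intro bexI[of _ "prob_plus S p q"]) (auto simp: prob_le_def prob_plus_def)
    qed (use x rng in \<open>auto simp: prob_le_def prob_compl_def prob_zero_def prob_one_def\<close>)
  qed
  have full: "full_states P (prob_le S) T"
    unfolding full_states_def T_def prob_le_def by auto
  have uni: "uniform_states P (prob_le S) (prob_zero S) T"
    unfolding uniform_states_def
  proof (intro ballI impI)
    fix p q assume "p \<in> P" "q \<in> P" "disj P (prob_le S) (prob_zero S) p q"
    then show "\<exists>r\<in>P. prob_le S p r \<and> prob_le S q r \<and> (\<forall>s\<in>T. s r = s p + s q)"
      using pl rng by (intro bexI[of _ "prob_plus S p q"]) (auto simp: prob_le_def prob_plus_def T_def)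
  qed
  show ?thesis using bp st full uni unfolding has_full_uniform_states_def by blast
qed

lemma part2:
  fixes P :: "'a set"
  assumes bp: "bpai P le c z u" and h: "has_full_uniform_states P le c z u"
  shows "\<exists>(S :: ('a \<Rightarrow> real) set) Q f. specific_set S Q \<and>
               poset_iso P le c z u Q (prob_le S) (prob_compl S) (prob_zero S) (prob_one S) f"
proof -
  obtain T where st: "\<forall>s\<in>T. specific_state P le c z u s" and full: "full_states P le T"
    and uni: "uniform_states P le z T" using h unfolding has_full_uniform_states_def by (elim exE conjE)
  have antis: "\<forall>p\<in>P. \<forall>q\<in>P. le p q \<and> le q p \<longrightarrow> p = q"
    using bp unfolding bpai_def by (elim conjE)
  have zP: "z \<in> P" using bp unfolding bpai_def by (elim conjE)
  have uP: "u \<in> P" using bp unfolding bpai_def by (elim conjE)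
  have cP: "\<forall>p\<in>P. c p \<in> P" using bp unfolding bpai_def by (elim conjE)
  define f where "f = (\<lambda>p. \<lambda>s\<in>T. s p)"
  define Q where "Q = f ` P"
  have mono: "\<And>s p q. s \<in> T \<Longrightarrow> p \<in> P \<Longrightarrow> q \<in> P \<Longrightarrow> le p q \<Longrightarrow> s p \<le> s q"
  proof -
    fix s p q assume sT: "s \<in> T" and pq: "p \<in> P" "q \<in> P" "le p q"
    have "\<forall>p\<in>P. \<forall>q\<in>P. le p q \<longrightarrow> s p \<le> s q"
      using bspec[OF st sT] unfolding specific_state_def by (elim conjE)
    then show "s p \<le> s q" using pq by blast
  qed
  have ordiff: "\<forall>p\<in>P. \<forall>q\<in>P. le p q \<longleftrightarrow> prob_le T (f p) (f q)"
  proof (intro ballI)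
    fix p q assume pP: "p \<in> P" and qP: "q \<in> P"
    have "prob_le T (f p) (f q) \<longleftrightarrow> (\<forall>s\<in>T. s p \<le> s q)"
      unfolding prob_le_def f_def by simp
    moreover have "le p q \<longleftrightarrow> (\<forall>s\<in>T. s p \<le> s q)"
    proof
      assume "le p q" then show "\<forall>s\<in>T. s p \<le> s q" using mono pP qP by blast
    next
      assume "\<forall>s\<in>T. s p \<le> s q" then show "le p q" using full pP qP unfolding full_states_def by blast
    qed
    ultimately show "le p q \<longleftrightarrow> prob_le T (f p) (f q)" by simp
  qed
  have inj: "inj_on f P"
  proof
    fix p q assume "p \<in> P" "q \<in> P" "f p = f q"
    then have "le p q" "le q p" using ordiff by (simp_all add: prob_le_def)
    then show "p = q" using antis \<open>p \<in> P\<close> \<open>q \<in> P\<close> by blast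
  qed
  have fc: "\<forall>p\<in>P. f (c p) = prob_compl T (f p)"
  proof
    fix p assume pP: "p \<in> P"
    have "\<And>s. s \<in> T \<Longrightarrow> s (c p) = 1 - s p" using st pP unfolding specific_state_def by blast
    then show "f (c p) = prob_compl T (f p)" unfolding f_def prob_compl_def by (auto intro!: HOL.ext)
  qed
  have fz: "f z = prob_zero T" and fu: "f u = prob_one T"
  proof -
    have "\<And>s. s \<in> T \<Longrightarrow> s z = 0 \<and> s u = 1" using st unfolding specific_state_def by blast
    then show "f z = prob_zero T" "f u = prob_one T" unfolding f_def prob_zero_def prob_one_def by (auto intro!: HOL.ext)
  qed
  have iso: "poset_iso P le c z u Q (prob_le T) (prob_compl T) (prob_zero T) (prob_one T) f"
    unfolding poset_iso_def bij_betw_def Q_def using inj ordiff fc fz fu by blast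
  have sub: "Q \<subseteq> (T \<rightarrow>\<^sub>E {0..1})"
  proof
    fix g assume "g \<in> Q"
    then obtain p where pP: "p \<in> P" and g: "g = f p" unfolding Q_def by auto
    have "\<And>s. s \<in> T \<Longrightarrow> 0 \<le> s p \<and> s p \<le> 1" using st pP unfolding specific_state_def by blast
    then show "g \<in> T \<rightarrow>\<^sub>E {0..1}" unfolding g f_def by auto
  qed
  have spec: "specific_set T Q"
    unfolding specific_set_def
  proof (intro conjI ballI impI)
    show "prob_zero T \<in> Q" using fz zP Q_def by (metis image_eqI)
    show "prob_one T \<in> Q" using fu uP Q_def by (metis image_eqI)
  next
    fix p assume "p \<in> Q"
    then obtain p0 where "p0 \<in> P" "p = f p0" unfolding Q_def by auto
    then show "prob_compl T p \<in> Q" using fc cP Q_def by (metis image_eqI)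
  next
    fix p q assume pQ: "p \<in> Q" and qQ: "q \<in> Q" and d: "disj Q (prob_le T) (prob_zero T) p q"
    from pQ obtain p0 where p0: "p0 \<in> P" "p = f p0" unfolding Q_def by auto
    from qQ obtain q0 where q0: "q0 \<in> P" "q = f q0" unfolding Q_def by auto
    have "disj P le z p0 q0"
      unfolding disj_def
    proof (intro ballI impI)
      fix r assume "r \<in> P" "le r p0 \<and> le r q0"
      then have "prob_le T (f r) p" "prob_le T (f r) q" using p0 q0 ordiff \<open>r \<in> P\<close> by auto
      moreover have "f r \<in> Q" using \<open>r \<in> P\<close> unfolding Q_def by blast
      ultimately have "f r = prob_zero T" using d[unfolded disj_def, rule_format, OF \<open>f r \<in> Q\<close>] by blast
      then have "f r = f z" using fz by simp
      then show "r = z" using inj \<open>r \<in> P\<close> zP by (meson inj_onD)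
    qed
    then obtain r where r: "r \<in> P" "\<forall>s\<in>T. s r = s p0 + s q0"
      using uni p0 q0 unfolding uniform_states_def by blast
    have "f r = prob_plus T p q" using r(2) unfolding p0(2) q0(2) f_def prob_plus_def by (auto intro!: HOL.ext)
    then show "prob_plus T p q \<in> Q" using r Q_def by (metis image_eqI)
  qed (rule sub)
  show ?thesis using spec iso by (intro exI[of _ T] exI[of _ Q] exI[of _ f] conjI)
qed

theorem theorem4p2:
  shows "(\<forall>(S :: 's set) P. specific_set S P \<longrightarrow>
            bpai P (prob_le S) (prob_compl S) (prob_zero S) (prob_one S) \<and>
            has_full_uniform_states P (prob_le S) (prob_compl S) (prob_zero S) (prob_one S))
       \<and> (\<forall>(P :: 'a set) le c z u. bpai P le c z u \<and> has_full_uniform_states P le c z u \<longrightarrow>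
            (\<exists>(S :: ('a \<Rightarrow> real) set) Q f. specific_set S Q \<and>
               poset_iso P le c z u Q (prob_le S) (prob_compl S) (prob_zero S) (prob_one S) f))"
proof (rule conjI; intro allI impI)
  fix S :: "'s set" and P assume "specific_set S P"
  then show "bpai P (prob_le S) (prob_compl S) (prob_zero S) (prob_one S) \<and>
            has_full_uniform_states P (prob_le S) (prob_compl S) (prob_zero S) (prob_one S)"
    by (rule part1)
next
  fix P :: "'a set" and le c z u assume "bpai P le c z u \<and> has_full_uniform_states P le c z u"
  then show "\<exists>(S :: ('a \<Rightarrow> real) set) Q f. specific_set S Q \<and>
               poset_iso P le c z u Q (prob_le S) (prob_compl S) (prob_zero S) (prob_one S) f"
    using part2[of P le c z u] by blast
qed

end
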